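(* Let $\kappa\in\mathbb{N}$, $\eta\in\{2,3,\ldots\}\cup\{\infty\}$, $p\in\mathbb{N}$, $p\ge1$, and assume $\pmb{\lambda}=\{\lambda_{-k}\}_{k=0}^{\kappa-1}\cup\{\lambda_{i,j}\}_{i,j=1}^{\eta,p}\subset(0,\infty)$ admits a subnormal completion. Then for every $M\in(0,\infty)$ the set $\mathcal{U}^M_{\pmb{\lambda}}$ is compact in $\mathcal{P}([0,M])^{\eta}$ with the product of the weak topologies.
   Context: $\mathcal{P}([0,M])$ is the set of Borel probability measures on $[0,M]$ with the weak topology (convergence against continuous functions). $\mathcal{U}^M_{\pmb{\lambda}}$ is the set of sequences $(\mu_i)_{i=1}^{\eta}$ of Borel measures on $[0,M]$ such that $\prod_{j=2}^{n+1}\lambda_{i,j}^2=\int_0^M t^n\,d\mu_i$ for $i\in\mathbb{N}\cap[1,\eta]$, $n\in\mathbb{N}\cap[0,p-1]$ (empty product $=1$, so each $\mu_i$ is a probability measure); $\sum_{i=1}^{\eta}\lambda_{i,1}^2\int_0^M t^{-k-1}d\mu_i(t)=\frac{1}{\prod_{j=0}^{k-1}\lambda_{-j}^2}$ for $k\in\mathbb{N}\cap[0,\kappa-1]$; and $\sum_{i=1}^{\eta}\lambda_{i,1}^2\int_0^M t^{-\kappa-1}d\mu_i(t)\le\frac{1}{\prod_{j=0}^{\kappa-1}\lambda_{-j}^2}$ (with $1/0=\infty$). Subnormal completion: there is a bounded subnormal weighted shift on the directed tree $\mathcal{T}_{\eta,\kappa}$ (vertices $\{-k\}_{0\le k\le\kappa}\sqcup\{(i,j)\}$,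 edges $(-k,-k+1)$, $(0,(i,1))$, $((i,j),(i,j+1))$, $S e_v=\sum_{u\text{ child of }v}\lambda'_ue_u$) whose weights at $-k$ ($k\le\kappa-1$) and $(i,j)$ ($j\le p$) equal the given $\lambda$'s. *)

theory Defs
  imports "HOL-Analysis.Analysis" "HOL-Probability.Probability"
begin

definition l2 :: "'a set \<Rightarrow> ('a \<Rightarrow> complex) set" where
  "l2 A = {f. (\<forall>x. x \<notin> A \<longrightarrow> f x = 0) \<and> (\<lambda>x. (cmod (f x))\<^sup>2) summable_on A}"

definition l2inner :: "'a set \<Rightarrow> ('a \<Rightarrow> complex) \<Rightarrow> ('a \<Rightarrow> complex) \<Rightarrow> complex" where
  "l2inner A f g = infsum (\<lambda>x. f x * cnj (g x)) A"

definition l2norm :: "'a set \<Rightarrow> ('a \<Rightarrow> complex) \<Rightarrow> real" where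
  "l2norm A f = sqrt (infsum (\<lambda>x. (cmod (f x))\<^sup>2) A)"

definition bounded_op :: "'a set \<Rightarrow> 'b set \<Rightarrow> (('a \<Rightarrow> complex) \<Rightarrow> ('b \<Rightarrow> complex)) \<Rightarrow> bool" where
  "bounded_op A B T \<longleftrightarrow>
     (\<forall>f\<in>l2 A. T f \<in> l2 B) \<and>
     (\<forall>f\<in>l2 A. \<forall>g\<in>l2 A. T (\<lambda>x. f x + g x) = (\<lambda>y. T f y + T g y)) \<and>
     (\<forall>f\<in>l2 A. \<forall>c::complex. T (\<lambda>x. c * f x) = (\<lambda>y. c * T f y)) \<and>
     (\<exists>C. \<forall>f\<in>l2 A. l2norm B (T f) \<le> C * l2norm A f)"

definition normal_op :: "((nat \<Rightarrow> complex) \<Rightarrow> (nat \<Rightarrow> complex)) \<Rightarrow> bool" where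
  "normal_op N \<longleftrightarrow> bounded_op UNIV UNIV N \<and>
     (\<exists>Nst. bounded_op UNIV UNIV Nst \<and>
        (\<forall>x\<in>l2 UNIV. \<forall>y\<in>l2 UNIV. l2inner UNIV (N x) y = l2inner UNIV x (Nst y)) \<and>
        (\<forall>x\<in>l2 UNIV. N (Nst x) = Nst (N x)))"

text \<open>Since the minimal normal extension of an operator on a
  separable space lives on a separable space, the ambient space can be taken to be l2(nat).\<close>
definition subnormal_op :: "'a set \<Rightarrow> (('a \<Rightarrow> complex) \<Rightarrow> ('a \<Rightarrow> complex)) \<Rightarrow> bool" where
  "subnormal_op A T \<longleftrightarrow> bounded_op A A T \<and>
     (\<exists>N J. normal_op N \<and> bounded_op A UNIV J \<and>
        (\<forall>f\<in>l2 A. l2norm UNIV (J f) = l2norm A f) \<and>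
        (\<forall>f\<in>l2 A. N (J f) = J (T f)))"

datatype vtx = Neg nat | Br nat nat  (* Neg k = vertex -k;  Br i j = vertex (i,j) *)

definition branches :: "enat \<Rightarrow> nat set" where
  "branches \<eta> = {i. 1 \<le> i \<and> enat i \<le> \<eta>}"

definition tree_V :: "nat \<Rightarrow> enat \<Rightarrow> vtx set" where
  "tree_V \<kappa> \<eta> = {Neg k | k. k \<le> \<kappa>} \<union> {Br i j | i j. i \<in> branches \<eta> \<and> 1 \<le> j}"

text \<open>Parent of a non-root vertex (the root is Neg kappa).\<close>
fun par :: "vtx \<Rightarrow> vtx" where
  "par (Neg k) = Neg (Suc k)"
| "par (Br i j) = (if j \<le> 1 then Neg 0 else Br i (j - 1))"

definition wshift :: "nat \<Rightarrow> enat \<Rightarrow> (vtx \<Rightarrow> real) \<Rightarrow> (vtx \<Rightarrow> complex) \<Rightarrow> (vtx \<Rightarrow> complex)" where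
  "wshift \<kappa> \<eta> w f v = (if v \<in> tree_V \<kappa> \<eta> \<and> v \<noteq> Neg \<kappa> then complex_of_real (w v) * f (par v) else 0)"

definition has_subnormal_completion ::
  "nat \<Rightarrow> enat \<Rightarrow> nat \<Rightarrow> (nat \<Rightarrow> real) \<Rightarrow> (nat \<Rightarrow> nat \<Rightarrow> real) \<Rightarrow> bool" where
  "has_subnormal_completion \<kappa> \<eta> p lneg lam \<longleftrightarrow>
     (\<exists>w. (\<forall>v\<in>tree_V \<kappa> \<eta> - {Neg \<kappa>}. w v > 0) \<and>
          (\<forall>k<\<kappa>. w (Neg k) = lneg k) \<and>
          (\<forall>i\<in>branches \<eta>. \<forall>j\<in>{1..p}. w (Br i j) = lam i j) \<and>
          subnormal_op (tree_V \<kappa> \<eta>) (wshift \<kappa> \<eta> w))"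

definition borel_0M :: "real \<Rightarrow> real measure" where
  "borel_0M M = restrict_space borel {0..M}"

definition probs_0M :: "real \<Rightarrow> real measure set" where
  "probs_0M M = {\<mu>. sets \<mu> = sets (borel_0M M) \<and> prob_space \<mu>}"

definition weak_top :: "real \<Rightarrow> real measure topology" where
  "weak_top M = pullback_topology (probs_0M M)
      (\<lambda>\<mu>. restrict (\<lambda>f. integral\<^sup>L \<mu> f) {f. continuous_on {0..M} f})
      (product_topology (\<lambda>_. euclideanreal) {f. continuous_on {0..M} f})"

definition inv_pow :: "nat \<Rightarrow> real \<Rightarrow> ennreal" where
  "inv_pow k t = (if t = 0 then \<infinity> else ennreal (1 / t ^ (k + 1)))"

definition U_set :: "real \<Rightarrow> nat \<Rightarrow> enat \<Rightarrow> nat \<Rightarrow> (nat \<Rightarrow> real) \<Rightarrow> (nat \<Rightarrow> nat \<Rightarrow> real)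
    \<Rightarrow> (nat \<Rightarrow> real measure) set" where
  "U_set M \<kappa> \<eta> p lneg lam =
     {\<mu> \<in> extensional (branches \<eta>).
        (\<forall>i\<in>branches \<eta>. sets (\<mu> i) = sets (borel_0M M)) \<and>
        (\<forall>i\<in>branches \<eta>. \<forall>n<p.
            (\<integral>\<^sup>+ t. ennreal (t ^ n) \<partial>(\<mu> i)) = ennreal (\<Prod>j\<in>{2..n+1}. (lam i j)\<^sup>2)) \<and>
        (\<forall>k<\<kappa>. (\<Sum>i. if i \<in> branches \<eta> then ennreal ((lam i 1)\<^sup>2) * (\<integral>\<^sup>+ t. inv_pow k t \<partial>(\<mu> i)) else 0)
                 = ennreal (1 / (\<Prod>j<k. (lneg j)\<^sup>2))) \<and>
        (\<Sum>i. if i \<in> branches \<eta> then ennreal ((lam i 1)\<^sup>2) * (\<integral>\<^sup>+ t. inv_pow \<kappa> t \<partial>(\<mu> i)) else 0)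
                 \<le> ennreal (1 / (\<Prod>j<\<kappa>. (lneg j)\<^sup>2))}"

end

theory Submission
  imports Defs
begin

lemma compactin_pullbackI:
  assumes "S \<subseteq> A" "compactin T (f ` S)"
  shows "compactin (pullback_topology A f T) S"
proof -
  have sub: "S \<subseteq> topspace (pullback_topology A f T)"
    using assms compactin_subset_topspace by (fastforce simp: topspace_pullback_topology)
  show ?thesis unfolding compactin_def
  proof (intro conjI allI impI sub)
    fix \<U> assume H: "(\<forall>U\<in>\<U>. openin (pullback_topology A f T) U) \<and> S \<subseteq> \<Union>\<U>"
    then have "\<forall>U\<in>\<U>. \<exists>V. openin T V \<and> U = f -` V \<inter> A" by (simp add: openin_pullback_topology)
    then obtain V where V: "\<forall>U\<in>\<U>. openin T (V U) \<and> U = f -` V U \<inter> A" by metis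
    have "f ` S \<subseteq> \<Union>(V ` \<U>)" using H V assms(1) by blast
    moreover have "\<forall>W\<in>V ` \<U>. openin T W" using V by blast
    ultimately obtain \<F> where F: "finite \<F>" "\<F> \<subseteq> V ` \<U>" "f ` S \<subseteq> \<Union>\<F>"
      using assms(2) unfolding compactin_def by meson
    then obtain \<G> where G: "finite \<G>" "\<G> \<subseteq> \<U>" "\<F> = V ` \<G>" by (meson finite_subset_image)
    have "S \<subseteq> \<Union>\<G>"
    proof
      fix x assume "x \<in> S"
      then obtain U where "U \<in> \<G>" "f x \<in> V U" using F G by blast
      then show "x \<in> \<Union>\<G>" using V G \<open>x \<in> S\<close> assms(1) by blast
    qed
    then show "\<exists>\<F>. finite \<F> \<and> \<F> \<subseteq> \<U> \<and> S \<subseteq> \<Union>\<F>" using G by blast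
  qed
qed

definition CM :: "real \<Rightarrow> (real \<Rightarrow> real) set" where
  "CM M = {f. continuous_on {0..M} f}"

definition Fm :: "real \<Rightarrow> real measure \<Rightarrow> ((real \<Rightarrow> real) \<Rightarrow> real)" where
  "Fm M \<mu> = restrict (\<lambda>f. integral\<^sup>L \<mu> f) (CM M)"

lemma weak_top_alt: "weak_top M = pullback_topology (probs_0M M) (Fm M) (product_topology (\<lambda>_. euclideanreal) (CM M))"
  unfolding weak_top_def Fm_def CM_def by simp

lemma probs_sets: "\<mu> \<in> probs_0M M \<Longrightarrow> sets \<mu> = sets (restrict_space borel {0..M})"
  unfolding probs_0M_def borel_0M_def by simp

lemma probs_space: "\<mu> \<in> probs_0M M \<Longrightarrow> space \<mu> = {0..M}"
proof -
  assume "\<mu> \<in> probs_0M M"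
  then have "space \<mu> = space (restrict_space borel {0..M})" by (rule sets_eq_imp_space_eq[OF probs_sets])
  then show ?thesis by (simp add: space_restrict_space)
qed

lemma probs_prob: "\<mu> \<in> probs_0M M \<Longrightarrow> prob_space \<mu>"
  unfolding probs_0M_def by simp

lemma probs_meas:
  assumes "\<mu> \<in> probs_0M M" "continuous_on {0..M} g"
  shows "g \<in> borel_measurable \<mu>"
proof -
  have g: "g \<in> borel_measurable (restrict_space borel {0..M})"
    using assms(2) by (rule borel_measurable_continuous_on_restrict)
  have e: "borel_measurable \<mu> = borel_measurable (restrict_space borel {0..M})"
    by (rule measurable_cong_sets[OF probs_sets[OF assms(1)] refl])
  show ?thesis unfolding e by (rule g)
qed

lemma cont_bound:
  fixes g :: "real \<Rightarrow> real"
  assumes "continuous_on {0..M::real} g"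
  obtains B where "\<forall>x\<in>{0..M}. \<bar>g x\<bar> \<le> B"
proof -
  have "compact (g ` {0..M})" using assms compact_continuous_image compact_Icc by blast
  then have "bounded (g ` {0..M})" by (rule compact_imp_bounded)
  then show ?thesis using that unfolding bounded_iff by auto
qed

lemma probs_integrable:
  fixes g :: "real \<Rightarrow> real"
  assumes "\<mu> \<in> probs_0M M" "continuous_on {0..M} g"
  shows "integrable \<mu> g"
proof -
  obtain B where B: "\<forall>x\<in>{0..M}. \<bar>g x\<bar> \<le> B" using cont_bound assms(2) by blast
  interpret prob_space \<mu> using assms(1) by (rule probs_prob)
  show ?thesis
    by (rule integrable_const_bound[where B=B]) (use B probs_space[OF assms(1)] probs_meas[OF assms] in auto)
qed

lemma probs_integral_bound:
  fixes g :: "real \<Rightarrow> real"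
  assumes "\<mu> \<in> probs_0M M" "continuous_on {0..M} g" "\<forall>x\<in>{0..M}. \<bar>g x\<bar> \<le> B"
  shows "\<bar>integral\<^sup>L \<mu> g\<bar> \<le> B"
proof -
  interpret prob_space \<mu> using assms(1) by (rule probs_prob)
  have "\<bar>integral\<^sup>L \<mu> g\<bar> \<le> integral\<^sup>L \<mu> (\<lambda>x. \<bar>g x\<bar>)"
    using integral_norm_bound[of \<mu> g] by simp
  also have "\<dots> \<le> integral\<^sup>L \<mu> (\<lambda>x. B)"
    by (rule integral_mono) (use probs_integrable[OF assms(1,2)] assms(3) probs_space[OF assms(1)] in auto)
  also have "\<dots> = B" by (simp add: prob_space)
  finally show ?thesis .
qed


definition bnd :: "real \<Rightarrow> (real \<Rightarrow> real) \<Rightarrow> real" where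
  "bnd M f = (SUP x\<in>{0..M}. \<bar>f x\<bar>)"

lemma bnd_le:
  assumes "f \<in> CM M" "x \<in> {0..M}"
  shows "\<bar>f x\<bar> \<le> bnd M f"
proof -
  obtain B where B: "\<forall>x\<in>{0..M}. \<bar>f x\<bar> \<le> B" using cont_bound assms(1) unfolding CM_def by blast
  show ?thesis unfolding bnd_def
    by (rule cSUP_upper) (use assms(2) B in \<open>auto intro: bdd_aboveI2\<close>)
qed

lemma Fm_in: "Fm M \<mu> \<in> topspace (product_topology (\<lambda>_. euclideanreal) (CM M))"
  unfolding Fm_def by simp

lemma Fm_image_sub:
  "Fm M ` probs_0M M \<subseteq> PiE (CM M) (\<lambda>f. {-bnd M f..bnd M f})"
proof
  fix y assume "y \<in> Fm M ` probs_0M M"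
  then obtain \<mu> where \<mu>: "\<mu> \<in> probs_0M M" "y = Fm M \<mu>" by blast
  have "-bnd M f \<le> integral\<^sup>L \<mu> f \<and> integral\<^sup>L \<mu> f \<le> bnd M f" if "f \<in> CM M" for f
    using probs_integral_bound[OF \<mu>(1), of f "bnd M f"] bnd_le[OF that] that unfolding CM_def by auto
  then show "y \<in> PiE (CM M) (\<lambda>f. {-bnd M f..bnd M f})"
    using \<mu>(2) unfolding Fm_def by auto
qed

lemma K_compact:
  "compactin (product_topology (\<lambda>_. euclideanreal) (CM M)) (PiE (CM M) (\<lambda>f. {-bnd M f..bnd M f}))"
  by (subst compactin_PiE) auto

lemma closure_approx:
  assumes L: "L \<in> (product_topology (\<lambda>_. euclideanreal) (CM M)) closure_of (Fm M ` probs_0M M)"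
    and G: "finite G" "G \<subseteq> CM M" and d: "\<delta> > 0"
  shows "\<exists>\<mu>\<in>probs_0M M. \<forall>g\<in>G. \<bar>integral\<^sup>L \<mu> g - L g\<bar> < \<delta>"
proof -
  let ?X = "product_topology (\<lambda>_. euclideanreal) (CM M)"
  define U where "U g = {h \<in> topspace ?X. h g \<in> ball (L g) \<delta>}" for g
  define T where "T = (\<Inter>g\<in>G. U g) \<inter> topspace ?X"
  have "openin ?X (U g)" if "g \<in> G" for g
    unfolding U_def
    by (rule openin_continuous_map_preimage[OF continuous_map_product_projection]) (use that G in auto)
  then have oT: "openin ?X T" unfolding T_def by (rule openin_INT[OF G(1)])
  have Lc: "L \<in> topspace ?X \<and> (\<forall>T. L \<in> T \<and> openin ?X T \<longrightarrow> (\<exists>y. y \<in> Fm M ` probs_0M M \<and> y \<in> T))"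
    using L unfolding in_closure_of by blast
  then have "L \<in> T" using d unfolding T_def U_def by auto
  then obtain y where "y \<in> Fm M ` probs_0M M" "y \<in> T" using Lc oT by blast
  then obtain \<mu> where \<mu>: "\<mu> \<in> probs_0M M" "Fm M \<mu> \<in> T" by blast
  have "\<forall>g\<in>G. \<bar>integral\<^sup>L \<mu> g - L g\<bar> < \<delta>"
  proof
    fix g assume "g \<in> G"
    then have "Fm M \<mu> g \<in> ball (L g) \<delta>" "g \<in> CM M" using \<mu>(2) G unfolding T_def U_def by auto
    then show "\<bar>integral\<^sup>L \<mu> g - L g\<bar> < \<delta>" unfolding Fm_def by (simp add: dist_real_def abs_minus_commute)
  qed
  then show ?thesis using \<mu>(1) by blast
qed

definition dpoly :: "rat list \<Rightarrow> real \<Rightarrow> real" where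
  "dpoly qs x = (\<Sum>i<length qs. real_of_rat (qs!i) * x^i)"

lemma dpoly_cont: "continuous_on A (dpoly qs)"
  unfolding dpoly_def by (intro continuous_intros)

lemma half_lemma: "(p::real) > 0 \<Longrightarrow> p * (e / (2 * p)) = e / 2"
  by (simp add: field_simps)

lemma dpoly_dense:
  fixes f :: "real \<Rightarrow> real"
  assumes "continuous_on {0..M} f" "e > 0"
  shows "\<exists>qs. \<forall>x\<in>{0..M}. \<bar>f x - dpoly qs x\<bar> < e"
proof -
  obtain g where g: "real_polynomial_function g" "\<And>x. x \<in> {0..M} \<Longrightarrow> \<bar>f x - g x\<bar> < e/2"
    using Stone_Weierstrass_real_polynomial_function[of "{0..M}" f "e/2"] assms by auto
  then obtain a n where an: "g = (\<lambda>x. \<Sum>i\<le>n. a i * x^i)"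
    using real_polynomial_function_iff_sum by blast
  define R where "R = max 1 M"
  have R1: "R \<ge> 1" unfolding R_def by simp
  define \<eta> where "\<eta> = e / (2 * ((real n + 1) * R^n))"
  have Rpos: "R^n > 0" using R1 by simp
  have eta: "\<eta> > 0" unfolding \<eta>_def using assms(2) Rpos by simp
  have "\<forall>i. \<exists>q::rat. \<bar>a i - of_rat q\<bar> < \<eta>"
  proof
    fix i
    obtain r where "r \<in> \<rat>" "a i - \<eta> < r" "r < a i + \<eta>" using Rats_dense_in_real[of "a i - \<eta>" "a i + \<eta>"] eta by auto
    moreover from \<open>r \<in> \<rat>\<close> obtain qq where "r = of_rat qq" by (auto elim: Rats_cases)
    ultimately have "\<bar>a i - of_rat qq\<bar> < \<eta>" unfolding abs_less_iff by linarith
    then show "\<exists>q::rat. \<bar>a i - of_rat q\<bar> < \<eta>" by blast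
  qed
  then have "\<exists>q. \<forall>i. \<bar>a i - of_rat (q i)\<bar> < \<eta>" by (rule choice)
  then obtain q where q: "\<And>i. \<bar>a i - of_rat (q i)\<bar> < \<eta>" by blast
  define qs where "qs = map q [0..<Suc n]"
  have dq: "dpoly qs x = (\<Sum>i\<le>n. of_rat (q i) * x^i)" for x
    unfolding dpoly_def qs_def lessThan_Suc_atMost[symmetric] by (intro sum.cong) (auto simp del: upt_Suc)
  have "\<bar>f x - dpoly qs x\<bar> < e" if x: "x \<in> {0..M}" for x
  proof -
    have "\<bar>g x - dpoly qs x\<bar> = \<bar>\<Sum>i\<le>n. (a i - of_rat (q i)) * x^i\<bar>"
      unfolding an dq by (simp add: sum_subtractf left_diff_distrib)
    also have "\<dots> \<le> (\<Sum>i\<le>n. \<bar>(a i - of_rat (q i)) * x^i\<bar>)" by (rule sum_abs)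
    also have "\<dots> \<le> (\<Sum>i\<le>n. \<eta> * R^n)"
    proof (rule sum_mono)
      fix i assume i: "i \<in> {..n}"
      have "\<bar>x\<bar> \<le> R" using x unfolding R_def by auto
      then have "\<bar>x\<bar>^i \<le> R^i" by (rule power_mono) simp
      also have "\<dots> \<le> R^n" using R1 i by (simp add: power_increasing)
      finally have "\<bar>x\<bar>^i \<le> R^n" .
      then show "\<bar>(a i - of_rat (q i)) * x^i\<bar> \<le> \<eta> * R^n"
        unfolding abs_mult power_abs using q[of i] eta
        by (intro mult_mono) auto
    qed
    also have "\<dots> = ((real n + 1) * R^n) * \<eta>" by simp
    also have "\<dots> = e/2" unfolding \<eta>_def by (rule half_lemma) (use Rpos in simp)
    finally show ?thesis using g(2)[OF x] by linarith
  qed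
  then show ?thesis by blast
qed


definition clamp :: "real \<Rightarrow> real \<Rightarrow> real" where
  "clamp M t = max 0 (min M t)"

lemma clamp_in: "M > 0 \<Longrightarrow> clamp M t \<in> {0..M}"
  unfolding clamp_def by auto

lemma clamp_id: "t \<in> {0..M} \<Longrightarrow> clamp M t = t"
  unfolding clamp_def by auto

lemma clamp_cont: "continuous_on A (clamp M)"
  unfolding clamp_def by (intro continuous_intros)

lemma ext_cont:
  assumes "M > 0" "f \<in> CM M"
  shows "isCont (\<lambda>t. f (clamp M t)) x"
proof -
  have "continuous_on UNIV (clamp M)" by (rule clamp_cont)
  moreover have "continuous_on (clamp M ` UNIV) f"
    by (rule continuous_on_subset[of "{0..M}"]) (use assms(2) clamp_in[OF assms(1)] in \<open>auto simp: CM_def\<close>)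
  ultimately have "continuous_on UNIV (f \<circ> clamp M)" by (rule continuous_on_compose)
  then have "continuous_on UNIV (\<lambda>t. f (clamp M t))" by (simp add: o_def)
  then show ?thesis by (simp add: continuous_on_eq_continuous_at)
qed

lemma ext_bound:
  assumes "M > 0" "f \<in> CM M"
  shows "\<bar>f (clamp M t)\<bar> \<le> bnd M f"
  using bnd_le[OF assms(2) clamp_in[OF assms(1)]] .

lemma ext_meas:
  assumes "M > 0" "f \<in> CM M"
  shows "(\<lambda>t. f (clamp M t)) \<in> borel_measurable borel"
  using ext_cont[OF assms] by (intro borel_measurable_continuous_onI continuous_at_imp_continuous_on) auto

lemma ext_integrable:
  assumes "M > 0" "f \<in> CM M" "prob_space N" "sets N = sets borel"
  shows "integrable N (\<lambda>t. f (clamp M t))"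
proof -
  interpret prob_space N by fact
  show ?thesis
    by (rule integrable_const_bound[where B="bnd M f"])
       (use ext_bound[OF assms(1,2)] ext_meas[OF assms(1,2)] assms(4) in auto)
qed

lemma eq_by_eps:
  fixes a b :: real
  assumes "\<And>e. e > 0 \<Longrightarrow> \<bar>a - b\<bar> \<le> 4 * e"
  shows "a = b"
proof (rule ccontr)
  assume "a \<noteq> b"
  then have "\<bar>a - b\<bar> > 0" by simp
  from assms[of "\<bar>a - b\<bar> / 8"] this show False by simp
qed

lemma closure_in_image:
  assumes M: "M > 0"
    and L: "L \<in> (product_topology (\<lambda>_. euclideanreal) (CM M)) closure_of (Fm M ` probs_0M M)"
  shows "L \<in> Fm M ` probs_0M M"
proof -
  let ?X = "product_topology (\<lambda>_. euclideanreal) (CM M)"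
  have Ltop: "L \<in> topspace ?X" using L by (simp add: in_closure_of)
  then have Lext: "L \<in> extensional (CM M)" by (simp add: PiE_def)
  define d where "d j = dpoly (from_nat j)" for j
  have dCM: "d j \<in> CM M" for j by (simp add: d_def CM_def dpoly_cont)
  have "\<exists>\<mu>\<in>probs_0M M. \<forall>g\<in>d ` {..<n}. \<bar>integral\<^sup>L \<mu> g - L g\<bar> < 1 / (real n + 1)" for n
    by (rule closure_approx[OF L]) (use dCM in auto)
  then have "\<forall>n. \<exists>\<mu>. \<mu> \<in> probs_0M M \<and> (\<forall>g\<in>d ` {..<n}. \<bar>integral\<^sup>L \<mu> g - L g\<bar> < 1 / (real n + 1))"
    by blast
  then have "\<exists>\<mu>s. \<forall>n. \<mu>s n \<in> probs_0M M \<and> (\<forall>g\<in>d ` {..<n}. \<bar>integral\<^sup>L (\<mu>s n) g - L g\<bar> < 1 / (real n + 1))"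
    by (subst choice_iff[symmetric])
  then obtain \<mu>s where \<mu>s0: "\<forall>n. \<mu>s n \<in> probs_0M M \<and> (\<forall>g\<in>d ` {..<n}. \<bar>integral\<^sup>L (\<mu>s n) g - L g\<bar> < 1 / (real n + 1))"
    by blast
  have \<mu>s: "\<And>n. \<mu>s n \<in> probs_0M M"
    "\<And>n j. j < n \<Longrightarrow> \<bar>integral\<^sup>L (\<mu>s n) (d j) - L (d j)\<bar> < 1 / (real n + 1)"
    using \<mu>s0 by auto
  have conv_d: "(\<lambda>n. integral\<^sup>L (\<mu>s n) (d j)) \<longlonglongrightarrow> L (d j)" for j
  proof (rule LIMSEQ_I)
    fix r :: real assume r: "r > 0"
    obtain N0 :: nat where N0: "1 / r < N0" using reals_Archimedean2 by blast
    show "\<exists>no. \<forall>n\<ge>no. norm (integral\<^sup>L (\<mu>s n) (d j) - L (d j)) < r"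
    proof (intro exI allI impI)
      fix n assume n: "n \<ge> max (Suc j) N0"
      have "1 / (real n + 1) < r"
      proof -
        have "1 / r < real n + 1" using N0 n by linarith
        then show ?thesis using r by (simp add: field_simps)
      qed
      then show "norm (integral\<^sup>L (\<mu>s n) (d j) - L (d j)) < r" using \<mu>s(2)[of j n] n by simp
    qed
  qed
  define \<nu> where "\<nu> n = distr (\<mu>s n) borel (\<lambda>x. x)" for n
  have idm: "(\<lambda>x. x) \<in> measurable (\<mu>s n) borel" for n
    using probs_meas[OF \<mu>s(1), of "\<lambda>x. x"] by simp
  have \<nu>rd: "real_distribution (\<nu> n)" for n
  proof -
    interpret prob_space "\<mu>s n" using probs_prob[OF \<mu>s(1)] .
    show ?thesis unfolding \<nu>_def
      by (intro real_distribution.intro real_distribution_axioms.intro prob_space_distr idm) simp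
  qed
  have \<nu>int: "integral\<^sup>L (\<nu> n) (\<lambda>t. f (clamp M t)) = integral\<^sup>L (\<mu>s n) f" if f: "f \<in> CM M" for f n
  proof -
    have "integral\<^sup>L (\<nu> n) (\<lambda>t. f (clamp M t)) = integral\<^sup>L (\<mu>s n) (\<lambda>t. f (clamp M t))"
      unfolding \<nu>_def by (rule integral_distr[OF idm ext_meas[OF M f]])
    also have "\<dots> = integral\<^sup>L (\<mu>s n) f"
      by (rule Bochner_Integration.integral_cong) (auto simp: probs_space[OF \<mu>s(1)] clamp_id)
    finally show ?thesis .
  qed
  have tight: "tight \<nu>"
    unfolding tight_def
  proof (intro conjI allI impI)
    fix n show "real_distribution (\<nu> n)" by (rule \<nu>rd)
  next
    fix e :: real assume e: "e > 0"
    have "measure (\<nu> n) {-1<..M} = 1" for n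
    proof -
      interpret prob_space "\<mu>s n" using probs_prob[OF \<mu>s(1)] .
      have "measure (\<nu> n) {-1<..M} = measure (\<mu>s n) ((\<lambda>x. x) -` {-1<..M} \<inter> space (\<mu>s n))"
        unfolding \<nu>_def by (rule measure_distr[OF idm]) simp
      also have "(\<lambda>x. x) -` {-1<..M} \<inter> space (\<mu>s n) = space (\<mu>s n)"
        using probs_space[OF \<mu>s(1)] by auto
      finally show ?thesis using prob_space by simp
    qed
    then show "\<exists>a b. a < b \<and> (\<forall>n. 1 - e < measure (\<nu> n) {a<..b})"
      using M e by (intro exI[of _ "-1"] exI[of _ M]) auto
  qed
  obtain r \<nu>0 where r: "strict_mono r" and \<nu>0: "real_distribution \<nu>0"
    and wc: "weak_conv_m (\<nu> \<circ> id \<circ> r) \<nu>0"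
    using tight_imp_convergent_subsubsequence[OF tight, of id] by (auto simp: strict_mono_def)
  interpret \<nu>0: real_distribution \<nu>0 by fact
  have rd2: "real_distribution ((\<nu> \<circ> id \<circ> r) n)" for n using \<nu>rd by simp
  have limf: "(\<lambda>n. integral\<^sup>L (\<mu>s (r n)) f) \<longlonglongrightarrow> integral\<^sup>L \<nu>0 (\<lambda>t. f (clamp M t))" if f: "f \<in> CM M" for f
  proof -
    have "(\<lambda>n. integral\<^sup>L ((\<nu> \<circ> id \<circ> r) n) (\<lambda>t. f (clamp M t))) \<longlonglongrightarrow> integral\<^sup>L \<nu>0 (\<lambda>t. f (clamp M t))"
      by (rule weak_conv_imp_integral_bdd_continuous_conv[OF rd2 \<nu>0 wc, of _ "bnd M f"])
         (use ext_cont[OF M f] ext_bound[OF M f] in auto)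
    then show ?thesis using \<nu>int[OF f] by simp
  qed
  have Ld: "L (d j) = integral\<^sup>L \<nu>0 (\<lambda>t. d j (clamp M t))" for j
  proof -
    have "(\<lambda>n. integral\<^sup>L (\<mu>s (r n)) (d j)) \<longlonglongrightarrow> L (d j)"
      using LIMSEQ_subseq_LIMSEQ[OF conv_d r] by (simp add: o_def)
    then show ?thesis using limf[OF dCM] LIMSEQ_unique by blast
  qed
  have Lf: "L f = integral\<^sup>L \<nu>0 (\<lambda>t. f (clamp M t))" if f: "f \<in> CM M" for f
  proof (rule eq_by_eps)
    fix e :: real assume e: "e > 0"
    obtain qs where qs: "\<forall>x\<in>{0..M}. \<bar>f x - dpoly qs x\<bar> < e"
      using dpoly_dense[of M f e] f e unfolding CM_def by blast
    define j where "j = to_nat qs"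
    have djq: "d j = dpoly qs" unfolding d_def j_def by simp
    obtain \<mu> where \<mu>: "\<mu> \<in> probs_0M M" "\<forall>g\<in>{f, d j}. \<bar>integral\<^sup>L \<mu> g - L g\<bar> < e"
      using closure_approx[OF L, of "{f, d j}" e] f dCM e by auto
    have "\<bar>integral\<^sup>L \<mu> (\<lambda>x. f x - d j x)\<bar> \<le> e"
      by (rule probs_integral_bound[OF \<mu>(1)])
         (use f dCM[of j] qs djq in \<open>auto simp: CM_def intro!: continuous_intros\<close>)
    moreover have "integral\<^sup>L \<mu> (\<lambda>x. f x - d j x) = integral\<^sup>L \<mu> f - integral\<^sup>L \<mu> (d j)"
      by (rule Bochner_Integration.integral_diff)
         (use probs_integrable[OF \<mu>(1)] f dCM[of j] in \<open>auto simp: CM_def\<close>)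
    ultimately have A: "\<bar>L f - L (d j)\<bar> \<le> 3 * e" using \<mu>(2) by auto
    have "\<bar>integral\<^sup>L \<nu>0 (\<lambda>t. f (clamp M t) - d j (clamp M t))\<bar> \<le> integral\<^sup>L \<nu>0 (\<lambda>t. e)"
    proof -
      have "\<bar>integral\<^sup>L \<nu>0 (\<lambda>t. f (clamp M t) - d j (clamp M t))\<bar>
            \<le> integral\<^sup>L \<nu>0 (\<lambda>t. \<bar>f (clamp M t) - d j (clamp M t)\<bar>)"
        using integral_norm_bound[of \<nu>0 "\<lambda>t. f (clamp M t) - d j (clamp M t)"] by simp
      also have "\<dots> \<le> integral\<^sup>L \<nu>0 (\<lambda>t. e)"
      proof (rule integral_mono)
        have i1: "integrable \<nu>0 (\<lambda>t. f (clamp M t))" by (rule ext_integrable[OF M f \<nu>0.prob_space_axioms]) simp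
        have i2: "integrable \<nu>0 (\<lambda>t. d j (clamp M t))" by (rule ext_integrable[OF M dCM \<nu>0.prob_space_axioms]) simp
        show "integrable \<nu>0 (\<lambda>t. \<bar>f (clamp M t) - d j (clamp M t)\<bar>)"
          using i1 i2 by (intro integrable_abs Bochner_Integration.integrable_diff)
        show "integrable \<nu>0 (\<lambda>t. e)" by simp
        fix t
        have "clamp M t \<in> {0..M}" by (rule clamp_in[OF M])
        then show "\<bar>f (clamp M t) - d j (clamp M t)\<bar> \<le> e" using qs djq by (simp add: less_imp_le)
      qed
      finally show ?thesis .
    qed
    moreover have "integral\<^sup>L \<nu>0 (\<lambda>t. f (clamp M t) - d j (clamp M t))
       = integral\<^sup>L \<nu>0 (\<lambda>t. f (clamp M t)) - integral\<^sup>L \<nu>0 (\<lambda>t. d j (clamp M t))"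
      by (rule Bochner_Integration.integral_diff)
         (use ext_integrable[OF M f \<nu>0.prob_space_axioms] ext_integrable[OF M dCM \<nu>0.prob_space_axioms] in auto)
    ultimately have B: "\<bar>integral\<^sup>L \<nu>0 (\<lambda>t. f (clamp M t)) - L (d j)\<bar> \<le> e"
      using Ld[of j] \<nu>0.prob_space by simp
    show "\<bar>L f - integral\<^sup>L \<nu>0 (\<lambda>t. f (clamp M t))\<bar> \<le> 4 * e" using A B by linarith
  qed
  define h where "h t = min 1 (max 0 (-t) + max 0 (t - M))" for t
  have hcont: "continuous_on UNIV h" unfolding h_def by (intro continuous_intros)
  have hc: "isCont h x" for x using hcont continuous_on_eq_continuous_at open_UNIV by blast
  have hnn: "0 \<le> h x" for x unfolding h_def by simp
  have hle: "h x \<le> 1" for x unfolding h_def by simp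
  have hb: "norm (h x) \<le> 1" for x using hnn hle by simp
  have hz: "h x = 0" if "x \<in> {0..M}" for x using that unfolding h_def by simp
  have hpos: "x \<in> {0..M}" if "h x = 0" for x
  proof (rule ccontr)
    assume "x \<notin> {0..M}"
    then have "max 0 (-x) + max 0 (x - M) > 0" by auto
    then show False using that unfolding h_def by (simp add: min_def split: if_splits)
  qed
  have hmeas: "h \<in> borel_measurable borel" using hcont by (intro borel_measurable_continuous_onI)
  have h0: "integral\<^sup>L \<nu>0 h = 0"
  proof -
    have lim: "(\<lambda>n. integral\<^sup>L ((\<nu> \<circ> id \<circ> r) n) h) \<longlonglongrightarrow> integral\<^sup>L \<nu>0 h"
      by (rule weak_conv_imp_integral_bdd_continuous_conv[OF rd2 \<nu>0 wc, of h 1]) (rule hc, rule hb)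
    have z: "integral\<^sup>L ((\<nu> \<circ> id \<circ> r) n) h = 0" for n
    proof -
      have "integral\<^sup>L (\<nu> (r n)) h = integral\<^sup>L (\<mu>s (r n)) h"
        unfolding \<nu>_def by (rule integral_distr[OF idm hmeas])
      also have "\<dots> = integral\<^sup>L (\<mu>s (r n)) (\<lambda>_. 0)"
        by (rule Bochner_Integration.integral_cong[OF refl]) (use hz probs_space[OF \<mu>s(1)] in blast)
      also have "\<dots> = 0" by simp
      finally show ?thesis by simp
    qed
    have "(\<lambda>n. integral\<^sup>L ((\<nu> \<circ> id \<circ> r) n) h) = (\<lambda>n. 0)" using z by (rule ext)
    then have "(\<lambda>n. 0::real) \<longlonglongrightarrow> integral\<^sup>L \<nu>0 h" using lim by simp
    then show ?thesis using LIMSEQ_unique[OF tendsto_const] by metis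
  qed
  have hint: "integrable \<nu>0 h"
    by (rule \<nu>0.integrable_const_bound[where B=1]) (use hmeas hb in auto)
  have "AE x in \<nu>0. h x = 0"
    using integral_nonneg_eq_0_iff_AE[OF hint] h0 hnn by simp
  then have AEin: "AE x in \<nu>0. x \<in> {0..M}"
    by eventually_elim (rule hpos)
  have sets0: "{0..M} \<in> sets \<nu>0" by simp
  have prob1: "emeasure \<nu>0 {0..M} = 1"
    using \<nu>0.AE_in_set_eq_1[OF sets0] AEin \<nu>0.emeasure_eq_measure by simp
  define \<mu>0 where "\<mu>0 = restrict_space \<nu>0 {0..M}"
  have sp: "{0..M} \<inter> space \<nu>0 \<in> sets \<nu>0" by simp
  have "sets \<mu>0 = sets (borel_0M M)"
    unfolding \<mu>0_def borel_0M_def sets_restrict_space by simp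
  moreover have "prob_space \<mu>0"
  proof
    show "emeasure \<mu>0 (space \<mu>0) = 1"
      unfolding \<mu>0_def using emeasure_restrict_space[OF sp] prob1 by (simp add: space_restrict_space)
  qed
  ultimately have \<mu>0P: "\<mu>0 \<in> probs_0M M" unfolding probs_0M_def by simp
  have "Fm M \<mu>0 = L"
  proof (rule extensionalityI[OF _ Lext])
    show "Fm M \<mu>0 \<in> extensional (CM M)" unfolding Fm_def by simp
  next
    fix f assume f: "f \<in> CM M"
    have "integral\<^sup>L \<mu>0 f = integral\<^sup>L \<nu>0 (\<lambda>x. indicator {0..M} x *\<^sub>R f x)"
      unfolding \<mu>0_def by (rule integral_restrict_space[OF sp])
    also have "\<dots> = integral\<^sup>L \<nu>0 (\<lambda>t. f (clamp M t))"
    proof (rule integral_cong_AE)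
      show "(\<lambda>x. indicator {0..M} x *\<^sub>R f x) \<in> borel_measurable \<nu>0"
        using borel_measurable_continuous_on_indicator[of "{0..M}" f] f unfolding CM_def by simp
      show "(\<lambda>t. f (clamp M t)) \<in> borel_measurable \<nu>0" using ext_meas[OF M f] by simp
      show "AE x in \<nu>0. indicator {0..M} x *\<^sub>R f x = f (clamp M x)"
        using AEin by eventually_elim (simp add: clamp_id)
    qed
    also have "\<dots> = L f" using Lf[OF f] by simp
    finally show "Fm M \<mu>0 f = L f" unfolding Fm_def using f by simp
  qed
  then show ?thesis using \<mu>0P by blast
qed

lemma weak_top_compact:
  assumes M: "M > 0"
  shows "compact_space (weak_top M)"
proof -
  let ?X = "product_topology (\<lambda>_. euclideanreal) (CM M)"
  have top: "topspace (weak_top M) = probs_0M M"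
    unfolding weak_top_alt topspace_pullback_topology using Fm_in by blast
  have cl: "closedin ?X (Fm M ` probs_0M M)"
    unfolding closure_of_subset_eq[symmetric]
    using Fm_in closure_in_image[OF M] by blast
  have "compactin ?X (Fm M ` probs_0M M)"
    by (rule closed_compactin[OF K_compact Fm_image_sub cl])
  then have "compactin (weak_top M) (probs_0M M)"
    unfolding weak_top_alt by (rule compactin_pullbackI[OF order_refl])
  then show ?thesis unfolding compact_space_def top .
qed

definition gq :: "nat \<Rightarrow> nat \<Rightarrow> real \<Rightarrow> real" where
  "gq k n t = 1 / (max t (1 / (real n + 1)))^(k+1)"

lemma gq_pos: "gq k n t > 0"
proof -
  have "max t (1 / (real n + 1)) > 0" by (simp add: less_max_iff_disj)
  then show ?thesis unfolding gq_def by simp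
qed

lemma gq_le: "gq k n t \<le> (real n + 1)^(k+1)"
proof -
  define m where "m = max t (1 / (real n + 1))"
  have m1: "m \<ge> 1 / (real n + 1)" unfolding m_def by simp
  have "1 / (real n + 1) > 0" by simp
  then have mpos: "m > 0" using m1 by linarith
  have "(real n + 1) * m \<ge> 1" using m1 by (simp add: field_simps)
  then have "1 \<le> ((real n + 1) * m)^(k+1)" by (rule one_le_power)
  then have "1 \<le> (real n + 1)^(k+1) * m^(k+1)" by (metis power_mult_distrib)
  then show ?thesis unfolding gq_def m_def[symmetric] using mpos by (simp add: divide_le_eq)
qed

lemma gq_mono:
  assumes "n \<le> n'"
  shows "gq k n t \<le> gq k n' t"
proof -
  have a: "1 / (real n' + 1) \<le> 1 / (real n + 1)" using assms by (simp add: frac_le)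
  have p: "max t (1 / (real n' + 1)) > 0" by (simp add: less_max_iff_disj)
  have le: "max t (1 / (real n' + 1)) \<le> max t (1 / (real n + 1))" using a by simp
  have "(max t (1 / (real n' + 1)))^(k+1) \<le> (max t (1 / (real n + 1)))^(k+1)"
    by (rule power_mono[OF le]) (use p in simp)
  moreover have "(max t (1 / (real n' + 1)))^(k+1) > 0" using p by simp
  ultimately show ?thesis unfolding gq_def by (simp add: frac_le)
qed

lemma gq_cont: "continuous_on A (gq k n)"
proof -
  have "max t (1 / (real n + 1)) > 0" for t by (simp add: less_max_iff_disj)
  then have nz: "(max t (1 / (real n + 1)))^(k+1) \<noteq> 0" for t by (metis less_irrefl power_not_zero)
  show ?thesis unfolding gq_def by (intro continuous_intros) (use nz in blast)
qed

lemma gq_big: "t > 0 \<Longrightarrow> 1 / (real n + 1) \<le> t \<Longrightarrow> gq k n t = 1 / t^(k+1)"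
  unfolding gq_def by (simp add: max_def)

lemma gq_le_inv: "t > 0 \<Longrightarrow> gq k n t \<le> 1 / t^(k+1)"
proof -
  assume t: "t > 0"
  have "t^(k+1) \<le> (max t (1 / (real n + 1)))^(k+1)" by (rule power_mono) (use t in auto)
  then show ?thesis unfolding gq_def using t by (simp add: frac_le)
qed

lemma ennreal_all_le_top:
  fixes x :: ennreal
  assumes "\<And>r. r \<ge> 0 \<Longrightarrow> ennreal r \<le> x"
  shows "x = top"
proof (rule ccontr)
  assume "x \<noteq> top"
  then obtain r where r: "x = ennreal r" "r \<ge> 0" by (cases x rule: ennreal_cases) auto
  have "ennreal (r + 1) \<le> ennreal r" using assms[of "r+1"] r by simp
  then show False using r by (simp add: ennreal_le_iff)
qed

lemma gq_SUP:
  assumes t: "t \<ge> 0"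
  shows "(SUP n. ennreal (gq k n t)) = inv_pow k t"
proof (cases "t = 0")
  case True
  have "(SUP n. ennreal (gq k n t)) = top"
  proof (rule ennreal_all_le_top)
    fix r :: real assume r: "r \<ge> 0"
    obtain n :: nat where n: "r < n" using reals_Archimedean2 by blast
    have g0: "gq k n 0 = (real n + 1)^(k+1)" unfolding gq_def by (simp add: power_one_over)
    have g1: "real n + 1 \<le> (real n + 1)^(k+1)" using power_increasing[of 1 "k+1" "real n + 1"] by simp
    have g2: "gq k n t = gq k n 0" using True by simp
    have "r \<le> gq k n t" using n g0 g1 g2 by linarith
    then have "ennreal r \<le> ennreal (gq k n t)" by (simp add: ennreal_leI)
    also have "\<dots> \<le> (SUP n. ennreal (gq k n t))" by (rule SUP_upper) simp
    finally show "ennreal r \<le> (SUP n. ennreal (gq k n t))" .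
  qed
  then show ?thesis using True unfolding inv_pow_def by simp
next
  case False
  then have tp: "t > 0" using t by simp
  obtain n0 :: nat where n0: "inverse (real (Suc n0)) < t" using reals_Archimedean[OF tp] by blast
  have n0': "1 / (real n0 + 1) \<le> t" using n0 by (simp add: inverse_eq_divide add.commute)
  have "(SUP n. ennreal (gq k n t)) = ennreal (1 / t^(k+1))"
  proof (rule antisym)
    show "(SUP n. ennreal (gq k n t)) \<le> ennreal (1 / t^(k+1))"
      by (rule SUP_least) (use gq_le_inv[OF tp] in \<open>auto intro: ennreal_leI\<close>)
    show "ennreal (1 / t^(k+1)) \<le> (SUP n. ennreal (gq k n t))"
      using gq_big[OF tp n0', of k] by (metis SUP_upper UNIV_I)
  qed
  then show ?thesis using False unfolding inv_pow_def by simp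
qed

lemma gq_bound:
  assumes t: "t \<ge> 0" and k: "k < \<kappa>"
  shows "inv_pow k t \<le> ennreal (gq k n t) + ennreal (1 / (real n + 1)^(\<kappa>-k)) * inv_pow \<kappa> t"
proof (cases "t = 0")
  case True
  have "ennreal (1 / (real n + 1)^(\<kappa>-k)) \<noteq> 0" by simp
  then have "ennreal (1 / (real n + 1)^(\<kappa>-k)) * inv_pow \<kappa> t = top"
    using True unfolding inv_pow_def by (simp add: ennreal_mult_top)
  then show ?thesis by simp
next
  case False
  then have tp: "t > 0" using t by simp
  have ipk: "inv_pow k t = ennreal (1 / t^(k+1))" "inv_pow \<kappa> t = ennreal (1 / t^(\<kappa>+1))"
    using False unfolding inv_pow_def by auto
  show ?thesis
  proof (cases "1 / (real n + 1) \<le> t")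
    case True
    then show ?thesis using gq_big[OF tp True, of k] ipk by (simp add: add_increasing2)
  next
    case small: False
    have e: "\<kappa> + 1 = (\<kappa> - k) + (k + 1)" using k by simp
    have "1 / t^(k+1) = t^(\<kappa>-k) * (1 / t^(\<kappa>+1))"
      unfolding e power_add using tp by (simp add: field_simps)
    also have "\<dots> \<le> (1 / (real n + 1))^(\<kappa>-k) * (1 / t^(\<kappa>+1))"
      by (rule mult_right_mono[OF power_mono]) (use small tp in auto)
    finally have r: "1 / t^(k+1) \<le> 1 / (real n + 1)^(\<kappa>-k) * (1 / t^(\<kappa>+1))"
      by (simp add: power_one_over)
    have "inv_pow k t \<le> ennreal (1 / (real n + 1)^(\<kappa>-k) * (1 / t^(\<kappa>+1)))"
      unfolding ipk by (rule ennreal_leI[OF r])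
    also have "\<dots> = ennreal (1 / (real n + 1)^(\<kappa>-k)) * inv_pow \<kappa> t"
      unfolding ipk by (rule ennreal_mult) (use tp in auto)
    also have "\<dots> \<le> ennreal (gq k n t) + ennreal (1 / (real n + 1)^(\<kappa>-k)) * inv_pow \<kappa> t"
      by (simp add: add_increasing)
    finally show ?thesis .
  qed
qed


lemma meas_probs:
  assumes "f \<in> borel_measurable borel" "\<mu> \<in> probs_0M M"
  shows "f \<in> borel_measurable \<mu>"
proof -
  have "f \<in> borel_measurable (restrict_space borel {0..M})" using assms(1) by (rule measurable_restrict_space1)
  then show ?thesis using assms(2) unfolding probs_0M_def borel_0M_def
    by (metis (mono_tags, lifting) mem_Collect_eq measurable_cong_sets)
qed

lemma inv_pow_meas: "inv_pow k \<in> borel_measurable borel"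
  unfolding inv_pow_def[abs_def] by measurable

lemma gq_meas: "gq k n \<in> borel_measurable borel"
  using gq_cont by (rule borel_measurable_continuous_onI)

lemma gq_nn:
  assumes "\<mu> \<in> probs_0M M"
  shows "(\<integral>\<^sup>+ t. ennreal (gq k n t) \<partial>\<mu>) = ennreal (integral\<^sup>L \<mu> (gq k n))"
  by (rule nn_integral_eq_integral[OF probs_integrable[OF assms gq_cont]]) (auto intro: less_imp_le[OF gq_pos])

lemma gq_int_nonneg: "0 \<le> integral\<^sup>L \<mu> (gq k n)"
  by (rule Bochner_Integration.integral_nonneg) (auto intro: less_imp_le[OF gq_pos])

definition Phi :: "nat set \<Rightarrow> (nat \<Rightarrow> nat \<Rightarrow> real) \<Rightarrow> nat \<Rightarrow> (nat \<Rightarrow> real measure) \<Rightarrow> ennreal" where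
  "Phi B lam k \<mu> = (\<Sum>i. if i \<in> B then ennreal ((lam i 1)\<^sup>2) * (\<integral>\<^sup>+ t. inv_pow k t \<partial>(\<mu> i)) else 0)"

definition Gq :: "nat set \<Rightarrow> (nat \<Rightarrow> nat \<Rightarrow> real) \<Rightarrow> nat \<Rightarrow> nat \<Rightarrow> (nat \<Rightarrow> real measure) \<Rightarrow> nat \<Rightarrow> ennreal" where
  "Gq B lam k n \<mu> i = (if i \<in> B then ennreal ((lam i 1)\<^sup>2) * (\<integral>\<^sup>+ t. ennreal (gq k n t) \<partial>(\<mu> i)) else 0)"

definition Sq :: "nat set \<Rightarrow> (nat \<Rightarrow> nat \<Rightarrow> real) \<Rightarrow> nat \<Rightarrow> nat \<Rightarrow> nat \<Rightarrow> (nat \<Rightarrow> real measure) \<Rightarrow> real" where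
  "Sq B lam k n N \<mu> = (\<Sum>i<N. if i \<in> B then (lam i 1)\<^sup>2 * integral\<^sup>L (\<mu> i) (gq k n) else 0)"

lemma Sq_eq:
  assumes PB: "\<forall>i\<in>B. \<mu> i \<in> probs_0M M"
  shows "ennreal (Sq B lam k n N \<mu>) = (\<Sum>i<N. Gq B lam k n \<mu> i)"
proof -
  have "ennreal (Sq B lam k n N \<mu>) = (\<Sum>i<N. ennreal (if i \<in> B then (lam i 1)\<^sup>2 * integral\<^sup>L (\<mu> i) (gq k n) else 0))"
    unfolding Sq_def by (rule sum_ennreal[symmetric]) (auto intro!: mult_nonneg_nonneg gq_int_nonneg)
  also have "\<dots> = (\<Sum>i<N. Gq B lam k n \<mu> i)"
  proof (rule sum.cong[OF refl])
    fix i
    show "ennreal (if i \<in> B then (lam i 1)\<^sup>2 * integral\<^sup>L (\<mu> i) (gq k n) else 0) = Gq B lam k n \<mu> i"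
      unfolding Gq_def using PB gq_nn[of "\<mu> i" M k n] gq_int_nonneg[of "\<mu> i" k n]
      by (auto simp: ennreal_mult)
  qed
  finally show ?thesis .
qed

lemma Gq_incseq: "incseq (\<lambda>n. Gq B lam k n \<mu> i)"
proof (rule incseq_SucI)
  fix n
  have "(\<integral>\<^sup>+ t. ennreal (gq k n t) \<partial>(\<mu> i)) \<le> (\<integral>\<^sup>+ t. ennreal (gq k (Suc n) t) \<partial>(\<mu> i))"
    by (rule nn_integral_mono) (rule ennreal_leI[OF gq_mono], simp)
  then show "Gq B lam k n \<mu> i \<le> Gq B lam k (Suc n) \<mu> i"
    unfolding Gq_def by (auto intro: mult_left_mono)
qed

lemma Phi_SUP:
  assumes PB: "\<forall>i\<in>B. \<mu> i \<in> probs_0M M"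
  shows "Phi B lam k \<mu> = (SUP n. \<Sum>i. Gq B lam k n \<mu> i)"
proof -
  have eq: "(if i \<in> B then ennreal ((lam i 1)\<^sup>2) * (\<integral>\<^sup>+ t. inv_pow k t \<partial>(\<mu> i)) else 0) = (SUP n. Gq B lam k n \<mu> i)" for i
  proof (cases "i \<in> B")
    case True
    then have P: "\<mu> i \<in> probs_0M M" using PB by blast
    have "(\<integral>\<^sup>+ t. inv_pow k t \<partial>(\<mu> i)) = (\<integral>\<^sup>+ t. (SUP n. ennreal (gq k n t)) \<partial>(\<mu> i))"
      by (rule nn_integral_cong) (use gq_SUP probs_space[OF P] in auto)
    also have "\<dots> = (SUP n. \<integral>\<^sup>+ t. ennreal (gq k n t) \<partial>(\<mu> i))"
    proof (rule nn_integral_monotone_convergence_SUP)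
      show "incseq (\<lambda>n t. ennreal (gq k n t))"
        by (rule incseq_SucI) (simp add: le_fun_def ennreal_leI gq_mono)
      show "(\<lambda>t. ennreal (gq k n t)) \<in> borel_measurable (\<mu> i)" for n
        using meas_probs[OF gq_meas P] by measurable
    qed
    finally show ?thesis using True unfolding Gq_def by (simp add: SUP_mult_left_ennreal)
  next
    case False
    then show ?thesis unfolding Gq_def by simp
  qed
  have "Phi B lam k \<mu> = (\<Sum>i. SUP n. Gq B lam k n \<mu> i)"
    unfolding Phi_def eq ..
  also have "\<dots> = (SUP n. \<Sum>i. Gq B lam k n \<mu> i)"
    by (rule ennreal_suminf_SUP_eq) (rule Gq_incseq)
  finally show ?thesis .
qed

lemma Phi_SUP2:
  assumes PB: "\<forall>i\<in>B. \<mu> i \<in> probs_0M M"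
  shows "Phi B lam k \<mu> = (SUP n. SUP N. ennreal (Sq B lam k n N \<mu>))"
  unfolding Phi_SUP[OF PB] Sq_eq[OF PB] suminf_eq_SUP ..

lemma Phi_le_iff:
  assumes PB: "\<forall>i\<in>B. \<mu> i \<in> probs_0M M" and C: "C \<ge> 0"
  shows "Phi B lam k \<mu> \<le> ennreal C \<longleftrightarrow> (\<forall>n N. Sq B lam k n N \<mu> \<le> C)"
  unfolding Phi_SUP2[OF PB] SUP_le_iff using C by (simp add: ennreal_le_iff)

lemma Sq_le_Phi:
  assumes PB: "\<forall>i\<in>B. \<mu> i \<in> probs_0M M"
  shows "ennreal (Sq B lam k n N \<mu>) \<le> Phi B lam k \<mu>"
  unfolding Phi_SUP2[OF PB] by (meson SUP_upper2 UNIV_I order_refl)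


lemma Gq_tail:
  assumes P: "\<forall>i\<in>B. \<mu> i \<in> probs_0M M"
  shows "Gq B lam k n \<mu> i \<le> ennreal ((real n + 1)^(k+1)) * ennreal (if i \<in> B then (lam i 1)\<^sup>2 else 0)"
proof (cases "i \<in> B")
  case True
  then have Pi: "\<mu> i \<in> probs_0M M" using P by blast
  interpret prob_space "\<mu> i" using probs_prob[OF Pi] .
  have "(\<integral>\<^sup>+ t. ennreal (gq k n t) \<partial>(\<mu> i)) \<le> (\<integral>\<^sup>+ t. ennreal ((real n + 1)^(k+1)) \<partial>(\<mu> i))"
    by (rule nn_integral_mono) (rule ennreal_leI[OF gq_le])
  also have "\<dots> = ennreal ((real n + 1)^(k+1))" by (simp add: emeasure_space_1)
  finally have "ennreal ((lam i 1)\<^sup>2) * (\<integral>\<^sup>+ t. ennreal (gq k n t) \<partial>(\<mu> i)) \<le> ennreal ((lam i 1)\<^sup>2) * ennreal ((real n + 1)^(k+1))"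
    by (rule mult_left_mono) simp
  then show ?thesis using True unfolding Gq_def by (simp add: mult.commute)
next
  case False
  then show ?thesis unfolding Gq_def by simp
qed

lemma Phi_tail:
  assumes PB: "\<forall>i\<in>B. \<mu> i \<in> probs_0M M" and k: "k < \<kappa>"
  shows "Phi B lam k \<mu> \<le> ennreal (Sq B lam k n N \<mu>)
     + ennreal ((real n + 1)^(k+1)) * (\<Sum>j. ennreal (if j + N \<in> B then (lam (j+N) 1)\<^sup>2 else 0))
     + ennreal (1 / (real n + 1)^(\<kappa>-k)) * Phi B lam \<kappa> \<mu>"
proof -
  define e where "e = ennreal (1 / (real n + 1)^(\<kappa>-k))"
  define F where "F k' i = (if i \<in> B then ennreal ((lam i 1)\<^sup>2) * (\<integral>\<^sup>+ t. inv_pow k' t \<partial>(\<mu> i)) else 0)" for k' i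
  define G where "G i = Gq B lam k n \<mu> i" for i
  have Phi_F: "Phi B lam k' \<mu> = (\<Sum>i. F k' i)" for k' unfolding Phi_def F_def ..
  have pt: "F k i \<le> G i + e * F \<kappa> i" for i
  proof (cases "i \<in> B")
    case True
    then have P: "\<mu> i \<in> probs_0M M" using PB by blast
    have m1: "(\<lambda>t. ennreal (gq k n t)) \<in> borel_measurable (\<mu> i)"
      using meas_probs[OF gq_meas P] by measurable
    have m2: "inv_pow \<kappa> \<in> borel_measurable (\<mu> i)" using meas_probs[OF inv_pow_meas P] .
    have "(\<integral>\<^sup>+ t. inv_pow k t \<partial>(\<mu> i)) \<le> (\<integral>\<^sup>+ t. ennreal (gq k n t) + e * inv_pow \<kappa> t \<partial>(\<mu> i))"
      by (rule nn_integral_mono) (use gq_bound[OF _ k] probs_space[OF P] in \<open>auto simp: e_def\<close>)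
    also have "\<dots> = (\<integral>\<^sup>+ t. ennreal (gq k n t) \<partial>(\<mu> i)) + e * (\<integral>\<^sup>+ t. inv_pow \<kappa> t \<partial>(\<mu> i))"
      using m1 m2 by (simp add: nn_integral_add nn_integral_cmult)
    finally have "ennreal ((lam i 1)\<^sup>2) * (\<integral>\<^sup>+ t. inv_pow k t \<partial>(\<mu> i))
       \<le> ennreal ((lam i 1)\<^sup>2) * ((\<integral>\<^sup>+ t. ennreal (gq k n t) \<partial>(\<mu> i)) + e * (\<integral>\<^sup>+ t. inv_pow \<kappa> t \<partial>(\<mu> i)))"
      by (rule mult_left_mono) simp
    then show ?thesis using True unfolding F_def G_def Gq_def
      by (simp add: distrib_left mult.assoc mult.left_commute)
  next
    case False then show ?thesis unfolding F_def G_def Gq_def by simp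
  qed
  have s1: "Phi B lam k \<mu> \<le> (\<Sum>i. G i + e * F \<kappa> i)"
    unfolding Phi_F by (rule suminf_le[OF pt summableI summableI])
  have s2: "(\<Sum>i. G i + e * F \<kappa> i) = (\<Sum>i. G i) + e * Phi B lam \<kappa> \<mu>"
    unfolding Phi_F by (simp add: suminf_add[OF summableI summableI, symmetric])
  have s3: "(\<Sum>i. G i) = (\<Sum>j. G (j + N)) + (\<Sum>i<N. G i)"
    by (rule suminf_offset) (rule summableI)
  have s4: "(\<Sum>i<N. G i) = ennreal (Sq B lam k n N \<mu>)" unfolding G_def using Sq_eq[OF PB] by simp
  have s5: "(\<Sum>j. G (j + N)) \<le> (\<Sum>j. ennreal ((real n + 1)^(k+1)) * ennreal (if j + N \<in> B then (lam (j+N) 1)\<^sup>2 else 0))"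
    by (rule suminf_le[OF _ summableI summableI]) (unfold G_def, rule Gq_tail[OF PB])
  have s6: "(\<Sum>j. ennreal ((real n + 1)^(k+1)) * ennreal (if j + N \<in> B then (lam (j+N) 1)\<^sup>2 else 0))
     = ennreal ((real n + 1)^(k+1)) * (\<Sum>j. ennreal (if j + N \<in> B then (lam (j+N) 1)\<^sup>2 else 0))"
    by (rule ennreal_suminf_cmult)
  show ?thesis
    using s1 s2 s3 s4 s5 s6 unfolding e_def
    by (smt (verit) add.commute add_mono order_refl order_trans)
qed


lemma weak_top_topspace: "topspace (weak_top M) = probs_0M M"
  unfolding weak_top_alt topspace_pullback_topology Fm_def by auto

lemma cont_int:
  assumes "i \<in> B" "g \<in> CM M"
  shows "continuous_map (product_topology (\<lambda>_. weak_top M) B) euclideanreal (\<lambda>\<mu>. integral\<^sup>L (\<mu> i) g)"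
proof -
  have c1: "continuous_map (product_topology (\<lambda>_. weak_top M) B) (weak_top M) (\<lambda>\<mu>. \<mu> i)"
    using assms(1) by (rule continuous_map_product_projection)
  have c2: "continuous_map (weak_top M) euclideanreal ((\<lambda>h. h g) \<circ> Fm M)"
    unfolding weak_top_alt by (rule continuous_map_pullback) (rule continuous_map_product_projection[OF assms(2)])
  have "(\<lambda>h. h g) \<circ> Fm M = (\<lambda>\<nu>. integral\<^sup>L \<nu> g)" using assms(2) by (auto simp: Fm_def fun_eq_iff)
  then show ?thesis using continuous_map_compose[OF c1 c2] by (simp add: o_def)
qed

lemma cont_Sq: "continuous_map (product_topology (\<lambda>_. weak_top M) B) euclideanreal (Sq B lam k n N)"
proof -
  have "continuous_map (product_topology (\<lambda>_. weak_top M) B) euclideanreal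
          (\<lambda>\<mu>. if i \<in> B then (lam i 1)\<^sup>2 * integral\<^sup>L (\<mu> i) (gq k n) else 0)" for i
  proof (cases "i \<in> B")
    case True
    have "gq k n \<in> CM M" unfolding CM_def using gq_cont by simp
    then show ?thesis using True by (simp add: continuous_map_real_mult_left cont_int)
  qed simp
  then show ?thesis unfolding Sq_def[abs_def] by (intro continuous_map_sum) auto
qed

lemma closedin_le: "continuous_map X euclideanreal f \<Longrightarrow> closedin X {x \<in> topspace X. f x \<le> c}"
  using closedin_continuous_map_preimage[of X euclideanreal f "{..c}"] by simp

lemma closedin_ge: "continuous_map X euclideanreal f \<Longrightarrow> closedin X {x \<in> topspace X. c \<le> f x}"
  using closedin_continuous_map_preimage[of X euclideanreal f "{c..}"] by simp

lemma closedin_eqc: "continuous_map X euclideanreal f \<Longrightarrow> closedin X {x \<in> topspace X. f x = c}"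
  using closedin_continuous_map_preimage[of X euclideanreal f "{c}"] by simp

lemma closedin_conj:
  "closedin X {x \<in> topspace X. P x} \<Longrightarrow> closedin X {x \<in> topspace X. Q x} \<Longrightarrow> closedin X {x \<in> topspace X. P x \<and> Q x}"
proof -
  assume "closedin X {x \<in> topspace X. P x}" "closedin X {x \<in> topspace X. Q x}"
  then have "closedin X ({x \<in> topspace X. P x} \<inter> {x \<in> topspace X. Q x})" by (rule closedin_Int)
  moreover have "{x \<in> topspace X. P x} \<inter> {x \<in> topspace X. Q x} = {x \<in> topspace X. P x \<and> Q x}" by auto
  ultimately show ?thesis by simp
qed

lemma closedin_all:
  assumes "\<And>j. j \<in> J \<Longrightarrow> closedin X {x \<in> topspace X. P j x}"
  shows "closedin X {x \<in> topspace X. \<forall>j\<in>J. P j x}"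
proof (cases "J = {}")
  case True then show ?thesis by simp
next
  case False
  have "closedin X (\<Inter>j\<in>J. {x \<in> topspace X. P j x})"
    by (rule closedin_Inter) (use assms False in auto)
  moreover have "(\<Inter>j\<in>J. {x \<in> topspace X. P j x}) = {x \<in> topspace X. \<forall>j\<in>J. P j x}" using False by auto
  ultimately show ?thesis by simp
qed

lemma closedin_all2:
  assumes "\<And>j. closedin X {x \<in> topspace X. P j x}"
  shows "closedin X {x \<in> topspace X. \<forall>j. P j x}"
  using closedin_all[of UNIV X P] assms by simp


lemma mom_iff:
  assumes P: "\<nu> \<in> probs_0M M" and c: "c \<ge> 0"
  shows "((\<integral>\<^sup>+ t. ennreal (t^n) \<partial>\<nu>) = ennreal c) \<longleftrightarrow> (integral\<^sup>L \<nu> (\<lambda>t. t^n) = c)"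
proof -
  have cont: "continuous_on {0..M} (\<lambda>t::real. t^n)" by (intro continuous_intros)
  have nn: "AE t in \<nu>. 0 \<le> t^n" using probs_space[OF P] by (intro AE_I2) auto
  have e: "(\<integral>\<^sup>+ t. ennreal (t^n) \<partial>\<nu>) = ennreal (integral\<^sup>L \<nu> (\<lambda>t. t^n))"
    by (rule nn_integral_eq_integral[OF probs_integrable[OF P cont] nn])
  have "0 \<le> integral\<^sup>L \<nu> (\<lambda>t. t^n)" using nn by (rule integral_nonneg_AE)
  then show ?thesis unfolding e using c by (simp add: ennreal_inj)
qed

lemma U_alt:
  "U_set M \<kappa> \<eta> p lneg lam = {\<mu> \<in> extensional (branches \<eta>).
        (\<forall>i\<in>branches \<eta>. sets (\<mu> i) = sets (borel_0M M)) \<and>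
        (\<forall>i\<in>branches \<eta>. \<forall>n<p.
            (\<integral>\<^sup>+ t. ennreal (t ^ n) \<partial>(\<mu> i)) = ennreal (\<Prod>j\<in>{2..n+1}. (lam i j)\<^sup>2)) \<and>
        (\<forall>k<\<kappa>. Phi (branches \<eta>) lam k \<mu> = ennreal (1 / (\<Prod>j<k. (lneg j)\<^sup>2))) \<and>
        Phi (branches \<eta>) lam \<kappa> \<mu> \<le> ennreal (1 / (\<Prod>j<\<kappa>. (lneg j)\<^sup>2))}"
  unfolding U_set_def Phi_def by (rule refl)

lemma small_eps:
  fixes a :: "nat \<Rightarrow> real" and D :: real
  assumes summ: "summable a" and k: "k < \<kappa>" and D: "D \<ge> 0" and d: "\<delta> > 0"
  shows "\<exists>n N. (real n + 1)^(k+1) * (\<Sum>j. a (j + N)) + 1 / (real n + 1)^(\<kappa>-k) * D < \<delta>"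
proof -
  obtain n :: nat where n: "2 * D / \<delta> < n" using reals_Archimedean2 by blast
  have p1: "(real n + 1)^1 \<le> (real n + 1)^(\<kappa>-k)" by (rule power_increasing) (use k in auto)
  have "1 / (real n + 1)^(\<kappa>-k) \<le> 1 / (real n + 1)" using p1 by (simp add: frac_le)
  then have "1 / (real n + 1)^(\<kappa>-k) * D \<le> 1 / (real n + 1) * D" using D by (rule mult_right_mono)
  also have "\<dots> < \<delta> / 2"
  proof -
    have "2 * D < \<delta> * n" using n d by (simp add: field_simps)
    then have "2 * D < \<delta> * (real n + 1)" using d by (simp add: algebra_simps)
    then show ?thesis by (simp add: field_simps)
  qed
  finally have A: "1 / (real n + 1)^(\<kappa>-k) * D < \<delta> / 2" .
  define c1 where "c1 = (real n + 1)^(k+1)"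
  have c1: "c1 > 0" unfolding c1_def by simp
  have T0: "(\<lambda>N. \<Sum>j. a (j + N)) \<longlonglongrightarrow> 0"
  proof -
    have "(\<lambda>N. suminf a - (\<Sum>i<N. a i)) \<longlonglongrightarrow> suminf a - suminf a"
      by (intro tendsto_diff tendsto_const summable_LIMSEQ summ)
    then show ?thesis using suminf_minus_initial_segment[OF summ] by simp
  qed
  have "\<delta> / (2 * c1) > 0" using d c1 by simp
  from order_tendstoD(2)[OF T0 this] obtain N where N: "(\<Sum>j. a (j + N)) < \<delta> / (2 * c1)"
    by (auto simp: eventually_sequentially)
  have "c1 * (\<Sum>j. a (j + N)) < c1 * (\<delta> / (2 * c1))" by (rule mult_strict_left_mono[OF N c1])
  also have "\<dots> = \<delta> / 2" using c1 by simp
  finally have "c1 * (\<Sum>j. a (j + N)) < \<delta> / 2" .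
  then show ?thesis using A unfolding c1_def by (intro exI[of _ n] exI[of _ N]) linarith
qed


lemma summ_from_U:
  assumes M: "M > 0" and \<mu>0: "\<mu>0 \<in> U_set M \<kappa> \<eta> p lneg lam" and k: "0 < \<kappa>"
    and PB: "\<forall>i\<in>branches \<eta>. \<mu>0 i \<in> probs_0M M"
  shows "summable (\<lambda>i. if i \<in> branches \<eta> then (lam i 1)\<^sup>2 else 0)"
proof -
  define B where "B = branches \<eta>"
  define a where "a i = (if i \<in> B then (lam i 1)\<^sup>2 else 0)" for i
  have P1: "Phi B lam 0 \<mu>0 = 1" using \<mu>0 k unfolding U_alt B_def by auto
  have pt: "ennreal (a i / M) \<le> (if i \<in> B then ennreal ((lam i 1)\<^sup>2) * (\<integral>\<^sup>+ t. inv_pow 0 t \<partial>(\<mu>0 i)) else 0)" for i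
  proof (cases "i \<in> B")
    case True
    then have P: "\<mu>0 i \<in> probs_0M M" using PB B_def by blast
    interpret prob_space "\<mu>0 i" using probs_prob[OF P] .
    have "ennreal (1 / M) = (\<integral>\<^sup>+ t. ennreal (1 / M) \<partial>(\<mu>0 i))" by (simp add: emeasure_space_1)
    also have "\<dots> \<le> (\<integral>\<^sup>+ t. inv_pow 0 t \<partial>(\<mu>0 i))"
    proof (rule nn_integral_mono)
      fix t assume "t \<in> space (\<mu>0 i)"
      then have t: "0 \<le> t" "t \<le> M" using probs_space[OF P] by auto
      show "ennreal (1 / M) \<le> inv_pow 0 t"
      proof (cases "t = 0")
        case False
        then have "1 / M \<le> 1 / t" using t by (simp add: frac_le)
        then show ?thesis using False unfolding inv_pow_def by (simp add: ennreal_leI)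
      qed (simp add: inv_pow_def)
    qed
    finally have "ennreal ((lam i 1)\<^sup>2) * ennreal (1 / M) \<le> ennreal ((lam i 1)\<^sup>2) * (\<integral>\<^sup>+ t. inv_pow 0 t \<partial>(\<mu>0 i))"
      by (rule mult_left_mono) simp
    moreover have "ennreal (a i / M) = ennreal ((lam i 1)\<^sup>2) * ennreal (1 / M)"
      unfolding a_def using True M by (simp add: ennreal_mult[symmetric] divide_inverse)
    ultimately show ?thesis using True by simp
  next
    case False then show ?thesis unfolding a_def by simp
  qed
  have "(\<Sum>i. ennreal (a i / M)) \<le> Phi B lam 0 \<mu>0"
    unfolding Phi_def by (rule suminf_le[OF pt summableI summableI])
  then have "(\<Sum>i. ennreal (a i / M)) \<noteq> top" using P1 by (auto simp: top_unique)
  then have "summable (\<lambda>i. a i / M)" by (rule summable_suminf_not_top[rotated]) (use M in \<open>simp add: a_def\<close>)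
  then have "summable (\<lambda>i. M * (a i / M))" by (rule summable_mult)
  then show ?thesis using M unfolding a_def B_def by simp
qed

theorem theorem6p6:
  fixes \<kappa> p :: nat and \<eta> :: enat and lneg :: "nat \<Rightarrow> real" and lam :: "nat \<Rightarrow> nat \<Rightarrow> real"
    and M :: real
  assumes "\<eta> \<ge> 2" and "p \<ge> 1"
    and "\<forall>k<\<kappa>. lneg k > 0"
    and "\<forall>i\<in>branches \<eta>. \<forall>j\<in>{1..p}. lam i j > 0"
    and "has_subnormal_completion \<kappa> \<eta> p lneg lam"
    and "M > 0"
  shows "compactin (product_topology (\<lambda>_. weak_top M) (branches \<eta>)) (U_set M \<kappa> \<eta> p lneg lam)"
proof -
  note M = \<open>M > 0\<close>
  define B where "B = branches \<eta>"
  define PT where "PT = product_topology (\<lambda>_. weak_top M) B"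
  define U where "U = U_set M \<kappa> \<eta> p lneg lam"
  define C where "C k = 1 / (\<Prod>j<k. (lneg j)\<^sup>2)" for k
  define mc where "mc i n = (\<Prod>j\<in>{2..n+1}. (lam i j)\<^sup>2)" for i n
  have Cnn: "C k \<ge> 0" for k unfolding C_def by (simp add: prod_nonneg)
  have mcnn: "mc i n \<ge> 0" for i n unfolding mc_def by (rule prod_nonneg) simp
  have topPT: "topspace PT = PiE B (\<lambda>_. probs_0M M)" unfolding PT_def by (simp add: weak_top_topspace)
  have Ual: "U = {\<mu> \<in> extensional B.
        (\<forall>i\<in>B. sets (\<mu> i) = sets (borel_0M M)) \<and>
        (\<forall>i\<in>B. \<forall>n<p. (\<integral>\<^sup>+ t. ennreal (t ^ n) \<partial>(\<mu> i)) = ennreal (mc i n)) \<and>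
        (\<forall>k<\<kappa>. Phi B lam k \<mu> = ennreal (C k)) \<and> Phi B lam \<kappa> \<mu> \<le> ennreal (C \<kappa>)}"
    unfolding U_def U_alt B_def C_def mc_def ..
  have PBtop: "\<forall>i\<in>B. \<mu> i \<in> probs_0M M" if "\<mu> \<in> topspace PT" for \<mu> using that unfolding topPT by blast
  have mom0: "mc i 0 = 1" for i unfolding mc_def by simp
  have Usub: "U \<subseteq> topspace PT"
  proof
    fix \<mu> assume \<mu>: "\<mu> \<in> U"
    show "\<mu> \<in> topspace PT" unfolding topPT
    proof (rule PiE_I)
      fix i assume i: "i \<in> B"
      have s: "sets (\<mu> i) = sets (borel_0M M)" using \<mu> i unfolding Ual by blast
      have allm: "\<forall>n<p. (\<integral>\<^sup>+ t. ennreal (t ^ n) \<partial>(\<mu> i)) = ennreal (mc i n)" using \<mu> i unfolding Ual by blast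
      have "(\<integral>\<^sup>+ t. ennreal (t ^ 0) \<partial>(\<mu> i)) = ennreal (mc i 0)"
        by (rule allm[rule_format]) (use \<open>p \<ge> 1\<close> in simp)
      then have "emeasure (\<mu> i) (space (\<mu> i)) = 1" unfolding mom0 by simp
      then show "\<mu> i \<in> probs_0M M" unfolding probs_0M_def using s by (auto intro: prob_spaceI)
    next
      fix i assume "i \<notin> B" then show "\<mu> i = undefined" using \<mu> unfolding Ual extensional_def by blast
    qed
  qed
  show ?thesis
  proof (cases "U = {}")
    case True
    then show ?thesis unfolding U_def by simp
  next
    case False
    then obtain \<mu>0 where \<mu>0: "\<mu>0 \<in> U" by blast
    define a where "a i = (if i \<in> B then (lam i 1)\<^sup>2 else 0)" for i
    have summ: "summable a" if "0 < \<kappa>"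
    proof -
      have "\<mu>0 \<in> topspace PT" using \<mu>0 Usub by blast
      then have "\<forall>i\<in>branches \<eta>. \<mu>0 i \<in> probs_0M M" using PBtop unfolding B_def by blast
      moreover have "\<mu>0 \<in> U_set M \<kappa> \<eta> p lneg lam" using \<mu>0 unfolding U_def .
      ultimately show ?thesis using summ_from_U[OF M _ that] unfolding a_def B_def by blast
    qed
    have ann: "a i \<ge> 0" for i unfolding a_def by simp
    define T where "T N = (\<Sum>j. a (j + N))" for N
    define eps where "eps k n N = (real n + 1)^(k+1) * T N + 1 / (real n + 1)^(\<kappa>-k) * C \<kappa>" for k n N
    define Z where "Z = {\<mu> \<in> topspace PT.
       (\<forall>i\<in>B. \<forall>n\<in>{..<p}. integral\<^sup>L (\<mu> i) (\<lambda>t. t^n) = mc i n) \<and>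
       (\<forall>n N. Sq B lam \<kappa> n N \<mu> \<le> C \<kappa>) \<and>
       (\<forall>k\<in>{..<\<kappa>}. \<forall>n N. Sq B lam k n N \<mu> \<le> C k) \<and>
       (\<forall>k\<in>{..<\<kappa>}. \<forall>n N. C k \<le> Sq B lam k n N \<mu> + eps k n N)}"
    have Zc: "closedin PT Z"
    proof -
      have c1: "closedin PT {\<mu> \<in> topspace PT. integral\<^sup>L (\<mu> i) (\<lambda>t. t^n) = c}" if "i \<in> B" for i n c
      proof -
        have "(\<lambda>t::real. t^n) \<in> CM M" unfolding CM_def by (simp add: continuous_intros)
        then show ?thesis unfolding PT_def by (rule closedin_eqc[OF cont_int[OF that]])
      qed
      have c2: "closedin PT {\<mu> \<in> topspace PT. Sq B lam k n N \<mu> \<le> c}" for k n N c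
        unfolding PT_def by (rule closedin_le[OF cont_Sq])
      have c3: "closedin PT {\<mu> \<in> topspace PT. c \<le> Sq B lam k n N \<mu> + e}" for k n N c e
      proof -
        have "{\<mu> \<in> topspace PT. c \<le> Sq B lam k n N \<mu> + e} = {\<mu> \<in> topspace PT. c - e \<le> Sq B lam k n N \<mu>}"
          by auto
        moreover have "closedin PT {\<mu> \<in> topspace PT. c - e \<le> Sq B lam k n N \<mu>}"
          unfolding PT_def by (rule closedin_ge[OF cont_Sq])
        ultimately show ?thesis by simp
      qed
      have a1: "closedin PT {\<mu> \<in> topspace PT. \<forall>i\<in>B. \<forall>n\<in>{..<p}. integral\<^sup>L (\<mu> i) (\<lambda>t. t^n) = mc i n}"
        by (intro closedin_all c1)
      have a2: "closedin PT {\<mu> \<in> topspace PT. \<forall>n N. Sq B lam \<kappa> n N \<mu> \<le> C \<kappa>}"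
        by (intro closedin_all2 c2)
      have a3: "closedin PT {\<mu> \<in> topspace PT. \<forall>k\<in>{..<\<kappa>}. \<forall>n N. Sq B lam k n N \<mu> \<le> C k}"
        by (intro closedin_all closedin_all2 c2)
      have a4: "closedin PT {\<mu> \<in> topspace PT. \<forall>k\<in>{..<\<kappa>}. \<forall>n N. C k \<le> Sq B lam k n N \<mu> + eps k n N}"
        by (intro closedin_all closedin_all2 c3)
      show ?thesis unfolding Z_def
        by (intro closedin_conj a1 a2 a3 a4)
    qed
    have UZ: "U = Z"
    proof
      show "U \<subseteq> Z"
      proof
        fix \<mu> assume \<mu>: "\<mu> \<in> U"
        have top: "\<mu> \<in> topspace PT" using \<mu> Usub by blast
        have PB: "\<forall>i\<in>B. \<mu> i \<in> probs_0M M" using PBtop[OF top] .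
        have m: "\<forall>i\<in>B. \<forall>n\<in>{..<p}. integral\<^sup>L (\<mu> i) (\<lambda>t. t^n) = mc i n"
        proof (intro ballI)
          fix i n assume i: "i \<in> B" and n: "n \<in> {..<p}"
          have e: "(\<integral>\<^sup>+ t. ennreal (t ^ n) \<partial>(\<mu> i)) = ennreal (mc i n)" using \<mu> i n unfolding Ual by blast
          show "integral\<^sup>L (\<mu> i) (\<lambda>t. t^n) = mc i n"
            using mom_iff[OF PB[rule_format, OF i] mcnn[of i n]] e by blast
        qed
        have PK: "Phi B lam \<kappa> \<mu> \<le> ennreal (C \<kappa>)" using \<mu> unfolding Ual by blast
        have s1: "\<forall>n N. Sq B lam \<kappa> n N \<mu> \<le> C \<kappa>" using PK Phi_le_iff[OF PB Cnn[of \<kappa>]] by blast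
        have Pk: "Phi B lam k \<mu> = ennreal (C k)" if "k < \<kappa>" for k using \<mu> that unfolding Ual by blast
        have s2: "\<forall>k\<in>{..<\<kappa>}. \<forall>n N. Sq B lam k n N \<mu> \<le> C k"
        proof (intro ballI allI)
          fix k n N assume k: "k \<in> {..<\<kappa>}"
          have "Phi B lam k \<mu> \<le> ennreal (C k)" using Pk[of k] k by simp
          then show "Sq B lam k n N \<mu> \<le> C k" using Phi_le_iff[OF PB Cnn[of k]] by blast
        qed
        have s3: "C k \<le> Sq B lam k n N \<mu> + eps k n N" if k: "k < \<kappa>" for k n N
        proof -
          have sm: "summable a" using summ k by simp
          have Tn: "T N \<ge> 0" unfolding T_def using ann by (intro suminf_nonneg summable_ignore_initial_segment sm)
          have Sn: "Sq B lam k n N \<mu> \<ge> 0" unfolding Sq_def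
            by (intro sum_nonneg) (auto intro!: mult_nonneg_nonneg gq_int_nonneg)
          have sT: "(\<Sum>j. ennreal (if j + N \<in> B then (lam (j+N) 1)\<^sup>2 else 0)) = ennreal (T N)"
          proof -
            have "(\<Sum>j. ennreal (if j + N \<in> B then (lam (j+N) 1)\<^sup>2 else 0)) = (\<Sum>j. ennreal (a (j + N)))"
              unfolding a_def ..
            also have "\<dots> = ennreal (\<Sum>j. a (j + N))"
              by (rule suminf_ennreal2[OF ann summable_ignore_initial_segment[OF sm]])
            finally show ?thesis unfolding T_def .
          qed
          have "ennreal (C k) = Phi B lam k \<mu>" using Pk[OF k] by simp
          also have "\<dots> \<le> ennreal (Sq B lam k n N \<mu>)
             + ennreal ((real n + 1)^(k+1)) * ennreal (T N)
             + ennreal (1 / (real n + 1)^(\<kappa>-k)) * Phi B lam \<kappa> \<mu>"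
            using Phi_tail[OF PB k, where n=n and N=N and lam=lam] unfolding sT .
          also have "\<dots> \<le> ennreal (Sq B lam k n N \<mu>)
             + ennreal ((real n + 1)^(k+1)) * ennreal (T N)
             + ennreal (1 / (real n + 1)^(\<kappa>-k)) * ennreal (C \<kappa>)"
            by (intro add_mono order_refl mult_left_mono PK) simp
          also have "\<dots> = ennreal (Sq B lam k n N \<mu> + eps k n N)"
          proof -
            have "ennreal ((real n + 1)^(k+1)) * ennreal (T N) = ennreal ((real n + 1)^(k+1) * T N)"
              by (rule ennreal_mult[symmetric]) (use Tn in simp_all)
            moreover have "ennreal (1 / (real n + 1)^(\<kappa>-k)) * ennreal (C \<kappa>) = ennreal (1 / (real n + 1)^(\<kappa>-k) * C \<kappa>)"
              by (rule ennreal_mult[symmetric]) (use Cnn in simp_all)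
            moreover have "ennreal (Sq B lam k n N \<mu>) + ennreal ((real n + 1)^(k+1) * T N)
                = ennreal (Sq B lam k n N \<mu> + (real n + 1)^(k+1) * T N)"
              by (rule ennreal_plus[symmetric]) (use Sn Tn in simp_all)
            moreover have "ennreal (Sq B lam k n N \<mu> + (real n + 1)^(k+1) * T N) + ennreal (1 / (real n + 1)^(\<kappa>-k) * C \<kappa>)
                = ennreal (Sq B lam k n N \<mu> + (real n + 1)^(k+1) * T N + 1 / (real n + 1)^(\<kappa>-k) * C \<kappa>)"
              by (rule ennreal_plus[symmetric]) (use Sn Tn Cnn in simp_all)
            ultimately show ?thesis unfolding eps_def by (simp add: add.assoc)
          qed
          finally have le: "ennreal (C k) \<le> ennreal (Sq B lam k n N \<mu> + eps k n N)" .
          have "0 \<le> Sq B lam k n N \<mu> + eps k n N"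
            unfolding eps_def using Sn Tn Cnn[of \<kappa>] by (intro add_nonneg_nonneg mult_nonneg_nonneg) simp_all
          then show ?thesis using le ennreal_le_iff by blast
        qed
        have s3': "\<forall>k\<in>{..<\<kappa>}. \<forall>n N. C k \<le> Sq B lam k n N \<mu> + eps k n N" using s3 by blast
        show "\<mu> \<in> Z" unfolding Z_def using top m s1 s2 s3' by blast
      qed
    next
      show "Z \<subseteq> U"
      proof
        fix \<mu> assume \<mu>: "\<mu> \<in> Z"
        have top: "\<mu> \<in> topspace PT" using \<mu> unfolding Z_def by blast
        have PB: "\<forall>i\<in>B. \<mu> i \<in> probs_0M M" using PBtop[OF top] .
        have ext: "\<mu> \<in> extensional B" using top unfolding topPT PiE_def by blast
        have sets: "\<forall>i\<in>B. sets (\<mu> i) = sets (borel_0M M)" using PB unfolding probs_0M_def by blast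
        have m: "\<forall>i\<in>B. \<forall>n<p. (\<integral>\<^sup>+ t. ennreal (t ^ n) \<partial>(\<mu> i)) = ennreal (mc i n)"
        proof (intro ballI allI impI)
          fix i n assume i: "i \<in> B" and n: "n < p"
          have e: "integral\<^sup>L (\<mu> i) (\<lambda>t. t^n) = mc i n" using \<mu> i n unfolding Z_def by blast
          show "(\<integral>\<^sup>+ t. ennreal (t ^ n) \<partial>(\<mu> i)) = ennreal (mc i n)"
            using mom_iff[OF PB[rule_format, OF i] mcnn[of i n]] e by blast
        qed
        have PK: "Phi B lam \<kappa> \<mu> \<le> ennreal (C \<kappa>)"
        proof -
          have "\<forall>n N. Sq B lam \<kappa> n N \<mu> \<le> C \<kappa>" using \<mu> unfolding Z_def by blast
          then show ?thesis using Phi_le_iff[OF PB Cnn[of \<kappa>]] by blast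
        qed
        have Pk: "Phi B lam k \<mu> = ennreal (C k)" if k: "k < \<kappa>" for k
        proof -
          have "\<forall>n N. Sq B lam k n N \<mu> \<le> C k" using \<mu> k unfolding Z_def by blast
          then have le: "Phi B lam k \<mu> \<le> ennreal (C k)" using Phi_le_iff[OF PB Cnn[of k]] by blast
          then have "Phi B lam k \<mu> \<noteq> top" by (auto simp: top_unique)
          then obtain r where r: "Phi B lam k \<mu> = ennreal r" "r \<ge> 0"
            by (cases "Phi B lam k \<mu>" rule: ennreal_cases) auto
          have rC: "r \<le> C k" using le r Cnn[of k] by (simp add: ennreal_le_iff)
          have Sr: "Sq B lam k n N \<mu> \<le> r" for n N
            using Sq_le_Phi[OF PB, of lam k n N] r by (simp add: ennreal_le_iff)
          have geZ: "\<forall>n N. C k \<le> Sq B lam k n N \<mu> + eps k n N" using \<mu> k unfolding Z_def by blast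
          have ge: "C k \<le> r + eps k n N" for n N
            using geZ Sr[of n N] by (meson add_right_mono order_trans)
          have "C k \<le> r"
          proof (rule ccontr)
            assume "\<not> C k \<le> r"
            then have d: "C k - r > 0" by simp
            have sm: "summable a" using summ k by simp
            obtain n N where "(real n + 1)^(k+1) * (\<Sum>j. a (j + N)) + 1 / (real n + 1)^(\<kappa>-k) * C \<kappa> < C k - r"
              using small_eps[OF sm k Cnn[of \<kappa>] d] by blast
            then have "eps k n N < C k - r" unfolding eps_def T_def .
            then show False using ge[of n N] by simp
          qed
          then show ?thesis using rC r by simp
        qed
        have Pk': "\<forall>k<\<kappa>. Phi B lam k \<mu> = ennreal (C k)" using Pk by blast
        show "\<mu> \<in> U" unfolding Ual using ext sets m PK Pk' by blast
      qed
    qed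
    have cs: "compact_space PT"
      unfolding PT_def compact_space_product_topology using weak_top_compact[OF M] by blast
    have "compactin PT Z"
      by (rule closed_compactin[OF cs[unfolded compact_space_def] _ Zc]) (use Usub UZ in blast)
    then show ?thesis unfolding UZ[symmetric] PT_def U_def B_def .
  qed
qed

end
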